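(* Let $k,\ell\ge 2$, $n\ge 1$, and let the multisets $e_1,\dots,e_{m}\subseteq\mathbb{Z}_n$ (each of size $k$) be arbitrary. Then the hypergraph $W_n$ determined by $e_1,\dots,e_m$ is orientable if and only if the weighted hypergraph $\hat W_n$ determined by $e_1,\dots,e_m$ is orientable. (In particular, for the random models, the events $\{W_n\text{ is orientable}\}$ and $\{\hat W_n\text{ is orientable}\}$ coincide.)
   Context: $\mathbb{Z}_n=\{0,\dots,n-1\}$ with arithmetic mod $n$; $[j,j+\ell)=\{j,\dots,j+\ell-1\}$ mod $n$. In the random model, $m=cn$ and each $e_i$ consists of $k$ independent uniform elements of $\mathbb{Z}_n$. A weighted hypergraph $H=(V,E,\eta)$ has weights $\eta:V\cup E\to\mathbb{N}$; an orientation assigns to each pair $(e,v)$ with $v\in e$ a number $\mu(e,v)\in\mathbb{N}_0$ such that $\sum_{v\in e}\mu(e,v)=\eta(e)$ for every $e\in E$ and $\sum_{e\ni v}\mu(e,v)\le\eta(v)$ for every $v\in V$; $H$ is orientable if an orientation exists. $W_n$: vertex set $\mathbb{Z}_n$, hyperedges $e'_i=\bigcup_{j\in e_i}[j,j+\ell)$ for $i=1,\dots,m$, all weights equal to $1$. $\hat W_n$: vertex set $\mathbb{Z}_n$ with $\eta(w)=\ell$ for every vertex $w$; "ordinary" edges $e_1,\dots,e_m$ with weight $1$; and "helper" edges $c_i=\{i,i+1\}$ for $i\in\mathbb{Z}_n$ with weight $\ell-1$. *)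

theory Defs
  imports Main "HOL-Library.Multiset"
begin

text \<open>Weighted hypergraph with vertex set V, vertex weights wv, edges indexed by a
finite index set I, edge E i (a set of vertices), edge weights we.\<close>

definition orientable ::
  "'v set \<Rightarrow> ('v \<Rightarrow> nat) \<Rightarrow> 'i set \<Rightarrow> ('i \<Rightarrow> 'v set) \<Rightarrow> ('i \<Rightarrow> nat) \<Rightarrow> bool" where
  "orientable V wv I E we \<longleftrightarrow>
     (\<exists>mu :: 'i \<Rightarrow> 'v \<Rightarrow> nat.
        (\<forall>i\<in>I. (\<Sum>v\<in>E i. mu i v) = we i) \<and>
        (\<forall>v\<in>V. (\<Sum>i\<in>{i\<in>I. v \<in> E i}. mu i v) \<le> wv v))"

text \<open>Z_n is represented by {0..<n}; the cyclic interval [j, j+l) mod n.\<close>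
definition cyc_interval :: "nat \<Rightarrow> nat \<Rightarrow> nat \<Rightarrow> nat set" where
  "cyc_interval n l j = {(j + t) mod n | t. t < l}"

text \<open>W_n: edges e'_i = union over j in e_i of [j, j+l), indices i < m = length es;
all weights 1.\<close>
definition W_orientable :: "nat \<Rightarrow> nat \<Rightarrow> nat multiset list \<Rightarrow> bool" where
  "W_orientable n l es =
     orientable {0..<n} (\<lambda>_. 1) {..<length es}
       (\<lambda>i. \<Union>j\<in>set_mset (es ! i). cyc_interval n l j) (\<lambda>_. 1)"

text \<open>hat W_n: vertex weights l; ordinary edges Inl i = e_i (i < m) with weight 1;
helper edges Inr i = {i, i+1 mod n} (i < n) with weight l - 1.\<close>
definition What_edge :: "nat \<Rightarrow> nat multiset list \<Rightarrow> nat + nat \<Rightarrow> nat set" where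
  "What_edge n es x = (case x of Inl i \<Rightarrow> set_mset (es ! i) | Inr i \<Rightarrow> {i, (i + 1) mod n})"

definition What_weight :: "nat \<Rightarrow> nat + nat \<Rightarrow> nat" where
  "What_weight l x = (case x of Inl i \<Rightarrow> 1 | Inr i \<Rightarrow> l - 1)"

definition What_orientable :: "nat \<Rightarrow> nat \<Rightarrow> nat multiset list \<Rightarrow> bool" where
  "What_orientable n l es =
     orientable {0..<n} (\<lambda>_. l) (Inl ` {..<length es} \<union> Inr ` {..<n})
       (What_edge n es) (What_weight l)"

end

theory Submission
  imports Defs
begin


lemma hall:
  assumes "finite I" "\<forall>i\<in>I. finite (A i)" "\<forall>S\<subseteq>I. card S \<le> card (\<Union>(A ` S))"
  shows "\<exists>f. (\<forall>i\<in>I. f i \<in> A i) \<and> inj_on f I"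
  using assms
proof (induction "card I" arbitrary: I A rule: less_induct)
  case less
  show ?case
  proof (cases "\<exists>S. S \<subseteq> I \<and> S \<noteq> {} \<and> S \<noteq> I \<and> card (\<Union>(A`S)) \<le> card S")
    case True
    then obtain S where S: "S \<subseteq> I" "S \<noteq> {}" "S \<noteq> I" "card (\<Union>(A`S)) \<le> card S" by blast
    define X where "X = \<Union>(A`S)"
    have fS: "finite S" using S less by (meson finite_subset)
    have cS: "card S < card I" using S less(2) by (simp add: psubset_card_mono psubsetI)
    obtain f1 where f1: "\<forall>i\<in>S. f1 i \<in> A i" "inj_on f1 S"
      using less(1)[OF cS fS, of A] less(3,4) S by auto
    have cT: "card (I - S) < card I" proof -
      have "card S > 0" using S fS by (simp add: card_gt_0_iff)
      moreover have "card S \<le> card I" using S less(2) by (simp add: card_mono)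
      ultimately show ?thesis using S fS by (simp add: card_Diff_subset)
    qed
    have finX: "finite X" using fS S less(3) by (auto simp: X_def)
    have hall2: "\<forall>T\<subseteq>I-S. card T \<le> card (\<Union>((\<lambda>i. A i - X)`T))"
    proof (intro allI impI)
      fix T assume T: "T \<subseteq> I - S"
      have fT: "finite T" using T less(2) by (meson finite_Diff finite_subset)
      have eq: "\<Union>((\<lambda>i. A i - X)`T) = \<Union>(A`(T\<union>S)) - X" by (auto simp: X_def)
      have sub: "X \<subseteq> \<Union>(A`(T\<union>S))" by (auto simp: X_def)
      have fU: "finite (\<Union>(A`(T\<union>S)))" using fT fS T S less(3) by auto
      have c1: "card (\<Union>((\<lambda>i. A i - X)`T)) = card (\<Union>(A`(T\<union>S))) - card X"
        using eq card_Diff_subset[OF finX sub] by simp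
      have c2: "card (T\<union>S) \<le> card (\<Union>(A`(T\<union>S)))"
        using less(4) T S(1) by (meson Diff_subset Un_least subset_trans)
      have c3: "card (T\<union>S) = card T + card S" using T fT fS by (subst card_Un_disjoint) auto
      show "card T \<le> card (\<Union>((\<lambda>i. A i - X)`T))" using c1 c2 c3 S(4)[folded X_def] by linarith
    qed
    obtain f2 where f2: "\<forall>i\<in>I-S. f2 i \<in> A i - X" "inj_on f2 (I-S)"
      using less(1)[OF cT _ _ hall2] less(2,3) by auto
    define f where "f i = (if i\<in>S then f1 i else f2 i)" for i
    have "\<forall>i\<in>I. f i \<in> A i" using f1 f2 by (auto simp: f_def)
    moreover have "inj_on f I"
    proof (rule inj_onI)
      fix a b assume ab: "a \<in> I" "b \<in> I" "f a = f b"
      show "a = b"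
      proof (cases "a \<in> S"; cases "b \<in> S")
        assume "a \<in> S" "b \<in> S" thus ?thesis using ab f1 by (auto simp: f_def inj_on_def)
      next
        assume "a \<notin> S" "b \<notin> S" thus ?thesis using ab f2 by (auto simp: f_def inj_on_def)
      next
        assume "a \<in> S" "b \<notin> S" thus ?thesis using ab f1 f2 by (auto simp: f_def X_def)
      next
        assume a1: "a \<notin> S" and b1: "b \<in> S"
        have "f1 b \<in> A b" using f1 b1 by auto
        moreover have "f2 a \<notin> A b" using f2 a1 b1 ab(1) by (auto simp: X_def)
        moreover have "f2 a = f1 b" using ab a1 b1 by (simp add: f_def)
        ultimately show ?thesis by simp
      qed
    qed
    ultimately show ?thesis by blast
  next
    case False
    show ?thesis
    proof (cases "I = {}")
      case True then show ?thesis by auto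
    next
      case ne: False
      then obtain i0 where i0: "i0 \<in> I" by blast
      have "card {i0} \<le> card (A i0)" using less(4) i0 by auto
      then have "A i0 \<noteq> {}" by auto
      then obtain x where x: "x \<in> A i0" by blast
      have cI: "card (I - {i0}) < card I" using i0 less(2) by (meson card_Diff1_less)
      have hall2: "\<forall>S\<subseteq>I-{i0}. card S \<le> card (\<Union>((\<lambda>i. A i - {x})`S))"
      proof (intro allI impI)
        fix S assume S: "S \<subseteq> I - {i0}"
        show "card S \<le> card (\<Union>((\<lambda>i. A i - {x})`S))"
        proof (cases "S = {}")
          case True then show ?thesis by simp
        next
          case sne: False
          have fS: "finite S" using S less(2) by (meson finite_Diff finite_subset)
          have "S \<noteq> I" using S i0 by auto
          then have lt: "card S < card (\<Union>(A`S))" using False S sne by auto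
          have eq: "\<Union>((\<lambda>i. A i - {x})`S) = \<Union>(A`S) - {x}" by auto
          have "finite (\<Union>(A`S))" using fS S less(3) by auto
          then have "card (\<Union>(A`S)) - 1 \<le> card (\<Union>(A`S) - {x})"
            by (metis card_Diff_singleton_if diff_le_self order_refl)
          then show ?thesis using lt unfolding eq by linarith
        qed
      qed
      obtain g where g: "\<forall>i\<in>I-{i0}. g i \<in> A i - {x}" "inj_on g (I-{i0})"
        using less(1)[OF cI _ _ hall2] less(2,3) by auto
      define f where "f = g(i0 := x)"
      have "\<forall>i\<in>I. f i \<in> A i" using g x by (auto simp: f_def)
      moreover have "inj_on f I"
      proof (rule inj_onI)
        fix a b assume ab: "a \<in> I" "b \<in> I" "f a = f b"
        show "a = b"
        proof (cases "a = i0"; cases "b = i0")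
          assume "a \<noteq> i0" "b \<noteq> i0" thus ?thesis using ab g by (auto simp: f_def inj_on_def)
        next
          assume "a = i0" "b \<noteq> i0" thus ?thesis using ab g by (auto simp: f_def)
        next
          assume "a \<noteq> i0" "b = i0" thus ?thesis using ab g by (auto simp: f_def)
        qed simp
      qed
      ultimately show ?thesis by blast
    qed
  qed
qed



lemma pred_mod: "a < (n::nat) \<Longrightarrow> (a + n - 1) mod n = (if a = 0 then n - 1 else a - 1)"
proof -
  assume a: "a < n"
  show ?thesis
  proof (cases "a = 0")
    case True then show ?thesis using a by simp
  next
    case False
    then have e: "a + n - 1 = (a - 1) + n" by simp
    have "(a + n - 1) mod n = ((a - 1) + n) mod n" by (simp only: e)
    also have "\<dots> = a - 1" using a by simp
    finally show ?thesis using False by simp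
  qed
qed

lemma suc_mod: "a < (n::nat) \<Longrightarrow> (a + 1) mod n = (if a = n - 1 then 0 else a + 1)"
  by (cases "a = n - 1") auto

lemma sum_pred_rot:
  fixes g :: "nat \<Rightarrow> int"
  assumes "n \<ge> 1"
  shows "(\<Sum>u<n. g ((u + n - 1) mod n)) = (\<Sum>u<n. g u)"
proof (rule sum.reindex_bij_witness[where i="\<lambda>u. (u + 1) mod n" and j="\<lambda>u. (u + n - 1) mod n"])
  fix a assume "a \<in> {..<n}"
  then have a: "a < n" by simp
  show "((a + n - 1) mod n + 1) mod n = a"
  proof (cases "a = 0")
    case True then show ?thesis using a pred_mod[OF a] suc_mod[of "n-1" n] by simp
  next
    case False
    then have "a - 1 < n" "a - 1 \<noteq> n - 1" using a by auto
    then show ?thesis using False pred_mod[OF a] suc_mod[of "a-1" n] by simp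
  qed
next
  fix a assume "a \<in> {..<n}"
  then have a: "a < n" by simp
  show "((a + 1) mod n + n - 1) mod n = a"
  proof (cases "a = n - 1")
    case True then show ?thesis using a suc_mod[OF a] pred_mod[of 0 n] by simp
  next
    case False
    then have "a + 1 < n" using a by auto
    then show ?thesis using False suc_mod[OF a] pred_mod[of "a+1" n] by simp
  qed
qed (use assms in auto)

lemma card_fibres:
  assumes "finite S" "\<forall>i\<in>S. j i < (n::nat)"
  shows "(\<Sum>u<n. card {i\<in>S. j i = u}) = card S"
proof -
  have "(\<Sum>u<n. card {i\<in>S. j i = u}) = (\<Sum>u<n. \<Sum>i\<in>S. if j i = u then 1 else 0)"
    using assms(1) by (simp add: sum.If_cases Int_def conj_commute)
  also have "\<dots> = (\<Sum>i\<in>S. \<Sum>u<n. if j i = u then 1 else 0)" by (rule sum.swap)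
  also have "\<dots> = (\<Sum>i\<in>S. 1)" using assms(2) by (intro sum.cong) (auto simp: sum.delta')
  finally show ?thesis by simp
qed


lemma pred_suc: "u < (n::nat) \<Longrightarrow> ((u + n - 1) mod n + 1) mod n = u"
proof (cases "u = 0")
  case True
  assume a: "u < n"
  then show ?thesis using True pred_mod[OF a] suc_mod[of "n-1" n] by simp
next
  case False
  assume a: "u < n"
  then have "u - 1 < n" "u - 1 \<noteq> n - 1" using False by auto
  then show ?thesis using False pred_mod[OF a] suc_mod[of "u-1" n] by simp
qed

lemma count_arg:
  fixes n l :: nat and c j :: "nat \<Rightarrow> nat" and S :: "nat set"
  assumes n: "n \<ge> 1" and l: "l \<ge> 1" and fS: "finite S" and jS: "\<forall>i\<in>S. j i < n"
    and cb: "\<forall>u<n. c u \<le> l - 1"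
    and K: "\<forall>v<n. card {i\<in>S. j i = v} + c ((v+n-1) mod n) \<le> c v + 1"
  shows "card S \<le> card (\<Union>i\<in>S. cyc_interval n l (j i))"
proof -
  define U where "U = (\<Union>i\<in>S. cyc_interval n l (j i))"
  define pr where "pr u = (u + n - 1) mod n" for u
  define P where "P u t \<longleftrightarrow> t < l \<and> (\<exists>i\<in>S. (j i + t) mod n = u)" for u t
  define H where "H u = insert 0 ((\<lambda>t. l - 1 - t) ` {t. P u t})" for u
  define h where "h u = Max (H u)" for u
  have finH: "finite (H u)" for u
  proof -
    have "{t. P u t} \<subseteq> {..<l}" by (auto simp: P_def)
    then show ?thesis unfolding H_def by (meson finite_imageI finite_insert finite_lessThan finite_subset)
  qed
  have hle: "h u \<le> l - 1" for u
    unfolding h_def using finH[of u] by (intro Max.boundedI) (auto simp: H_def)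
  have hge: "x \<in> H u \<Longrightarrow> x \<le> h u" for x u unfolding h_def using finH by simp
  have inU: "P u t \<Longrightarrow> u \<in> U" for u t unfolding P_def U_def cyc_interval_def by auto
  have hpos: "h u > 0 \<Longrightarrow> \<exists>t. P u t \<and> h u = l - 1 - t" for u
  proof -
    assume "h u > 0"
    moreover have "h u \<in> H u" unfolding h_def using finH by (intro Max_in) (auto simp: H_def)
    ultimately show ?thesis unfolding H_def by auto
  qed
  have step: "u < n \<Longrightarrow> P (pr u) t \<Longrightarrow> t + 1 < l \<Longrightarrow> P u (t+1)" for u t
  proof -
    assume u: "u < n" and p: "P (pr u) t" and t: "t + 1 < l"
    then obtain i where i: "i \<in> S" "(j i + t) mod n = pr u" unfolding P_def by auto
    have "(j i + (t + 1)) mod n = ((j i + t) mod n + 1) mod n" by (simp add: mod_Suc_eq)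
    also have "\<dots> = u" using i(2) pred_suc[OF u] by (simp add: pr_def)
    finally show ?thesis using t i(1) unfolding P_def by blast
  qed
  have h3: "h (pr u) \<le> h u + 1" if u: "u < n" for u
  proof (cases "h (pr u) = 0")
    case True then show ?thesis by simp
  next
    case False
    then obtain t where t: "P (pr u) t" "h (pr u) = l - 1 - t" using hpos by blast
    then have "t + 1 < l" using False by simp
    then have "P u (t+1)" using step[OF u t(1)] by simp
    then have "l - 1 - (t+1) \<le> h u" using hge unfolding H_def by blast
    then show ?thesis using t(2) by simp
  qed
  have h4: "h (pr u) = 0" if u: "u < n" and nU: "u \<notin> U" for u
  proof (rule ccontr)
    assume "h (pr u) \<noteq> 0"
    then obtain t where t: "P (pr u) t" "h (pr u) = l - 1 - t" using hpos by blast
    then have "t + 1 < l" using \<open>h (pr u) \<noteq> 0\<close> by simp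
    then have "P u (t+1)" using step[OF u t(1)] by simp
    then show False using inU nU by blast
  qed
  have P0: "i \<in> S \<Longrightarrow> P (j i) 0" for i using jS l unfolding P_def by auto
  have h2: "i \<in> S \<Longrightarrow> h (j i) = l - 1" for i
  proof -
    assume i: "i \<in> S"
    have "l - 1 \<in> H (j i)" using P0[OF i] unfolding H_def by force
    then show ?thesis using hge hle by (meson le_antisym)
  qed
  have anc: "i \<in> S \<Longrightarrow> j i \<in> U" for i using P0 inU by blast
  define c' where "c' u = min (c u) (h u)" for u
  have pt: "int (card {i\<in>S. j i = u}) \<le> (if u\<in>U then 1 else 0) + int (c' u) - int (c' (pr u))"
    if u: "u < n" for u
  proof (cases "u \<in> U")
    case False
    then have "{i\<in>S. j i = u} = {}" using anc by auto
    moreover have "c' (pr u) = 0" using h4[OF u False] by (simp add: c'_def)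
    ultimately show ?thesis using False by (simp del: Collect_empty_eq)
  next
    case True
    have Ku: "card {i\<in>S. j i = u} + c (pr u) \<le> c u + 1" using K u by (simp add: pr_def)
    show ?thesis
    proof (cases "{i\<in>S. j i = u} = {}")
      case False
      then obtain i where "i \<in> S" "j i = u" by auto
      then have "h u = l - 1" using h2 by auto
      then have "c' u = c u" using cb u by (simp add: c'_def)
      moreover have "c' (pr u) \<le> c (pr u)" by (simp add: c'_def)
      ultimately show ?thesis using True Ku by simp
    next
      case e: True
      have "c (pr u) \<le> c u + 1" using Ku by simp
      then have "c' (pr u) \<le> c' u + 1" using h3[OF u] by (simp add: c'_def)
      then show ?thesis using e True by (simp del: Collect_empty_eq)
    qed
  qed
  have Usub: "U \<subseteq> {..<n}" unfolding U_def cyc_interval_def using n by auto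
  have "int (card S) = (\<Sum>u<n. int (card {i\<in>S. j i = u}))"
    using card_fibres[OF fS jS] by (metis of_nat_sum)
  also have "\<dots> \<le> (\<Sum>u<n. (if u\<in>U then 1 else 0) + int (c' u) - int (c' (pr u)))"
    using pt by (intro sum_mono) auto
  also have "\<dots> = (\<Sum>u<n. (if u\<in>U then 1 else 0)) + (\<Sum>u<n. int (c' u)) - (\<Sum>u<n. int (c' (pr u)))"
    by (simp add: sum.distrib sum_subtractf)
  also have "(\<Sum>u<n. int (c' (pr u))) = (\<Sum>u<n. int (c' u))"
    unfolding pr_def by (rule sum_pred_rot[OF n])
  also have "(\<Sum>u<n. (if u\<in>U then 1 else 0)) = int (card U)"
  proof -
    have "(\<Sum>u<n. (if u\<in>U then 1 else 0::int)) = int (card ({..<n} \<inter> U))"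
      by (simp add: sum.If_cases)
    also have "{..<n} \<inter> U = U" using Usub by auto
    finally show ?thesis .
  qed
  finally show ?thesis unfolding U_def by simp
qed



definition Wedge :: "nat \<Rightarrow> nat \<Rightarrow> nat multiset list \<Rightarrow> nat \<Rightarrow> nat set" where
  "Wedge n l es i = (\<Union>j\<in>set_mset (es ! i). cyc_interval n l j)"

lemma cyc_sub: "n \<ge> 1 \<Longrightarrow> cyc_interval n l j \<subseteq> {..<n}"
  unfolding cyc_interval_def by auto

lemma Wedge_sub: "n \<ge> 1 \<Longrightarrow> Wedge n l es i \<subseteq> {..<n}"
  unfolding Wedge_def using cyc_sub by blast

lemma sum_two_le:
  fixes g :: "'a \<Rightarrow> nat"
  assumes "finite A" "a \<in> A" "b \<in> A" "a \<noteq> b"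
  shows "g a + g b \<le> sum g A"
proof -
  have "sum g {a, b} \<le> sum g A" using assms by (intro sum_mono2) auto
  then show ?thesis using assms by simp
qed

lemma W_iff:
  assumes n: "n \<ge> 1"
  shows "W_orientable n l es \<longleftrightarrow>
    (\<exists>f. (\<forall>i<length es. f i \<in> Wedge n l es i) \<and> inj_on f {..<length es})"
proof
  assume "W_orientable n l es"
  then obtain mu :: "nat \<Rightarrow> nat \<Rightarrow> nat" where mu1: "\<forall>i\<in>{..<length es}. (\<Sum>v\<in>Wedge n l es i. mu i v) = 1"
    and mu2: "\<forall>v\<in>{0..<n}. (\<Sum>i\<in>{i\<in>{..<length es}. v \<in> Wedge n l es i}. mu i v) \<le> 1"
    unfolding W_orientable_def orientable_def Wedge_def[symmetric] by blast
  have ex: "\<exists>v\<in>Wedge n l es i. mu i v \<ge> 1" if i: "i < length es" for i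
  proof (rule ccontr)
    assume "\<not> ?thesis"
    then have "(\<Sum>v\<in>Wedge n l es i. mu i v) = 0" by (intro sum.neutral) auto
    then show False using mu1 i by simp
  qed
  define f where "f i = (SOME v. v \<in> Wedge n l es i \<and> mu i v \<ge> 1)" for i
  have f: "f i \<in> Wedge n l es i \<and> mu i (f i) \<ge> 1" if "i < length es" for i
    unfolding f_def using someI_ex[OF ex[OF that, unfolded Bex_def]] .
  have "inj_on f {..<length es}"
  proof (rule inj_onI, rule ccontr)
    fix a b assume a: "a \<in> {..<length es}" and b: "b \<in> {..<length es}" and ab: "f a = f b" "a \<noteq> b"
    define v where "v = f a"
    have va: "v \<in> Wedge n l es a" "mu a v \<ge> 1" using f a v_def by auto
    have vb: "v \<in> Wedge n l es b" "mu b v \<ge> 1" using f b ab v_def by auto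
    have vn: "v \<in> {0..<n}" using va Wedge_sub[OF n] by auto
    have "mu a v + mu b v \<le> (\<Sum>i\<in>{i\<in>{..<length es}. v \<in> Wedge n l es i}. mu i v)"
      using a b va vb ab by (intro sum_two_le) auto
    then show False using mu2 vn va vb by fastforce
  qed
  then show "\<exists>f. (\<forall>i<length es. f i \<in> Wedge n l es i) \<and> inj_on f {..<length es}"
    using f by blast
next
  assume "\<exists>f. (\<forall>i<length es. f i \<in> Wedge n l es i) \<and> inj_on f {..<length es}"
  then obtain f where f: "\<forall>i<length es. f i \<in> Wedge n l es i" "inj_on f {..<length es}" by blast
  define mu where "mu i v = (if v = f i then 1 else 0::nat)" for i v
  have finW: "finite (Wedge n l es i)" for i using finite_subset[OF Wedge_sub[OF n]] by simp
  have "\<forall>i<length es. (\<Sum>v\<in>Wedge n l es i. mu i v) = 1"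
    using f(1) finW by (simp add: mu_def sum.delta')
  moreover have "(\<Sum>i\<in>{i\<in>{..<length es}. v \<in> Wedge n l es i}. mu i v) \<le> 1" for v
  proof -
    let ?A = "{i\<in>{..<length es}. v \<in> Wedge n l es i}"
    have "(\<Sum>i\<in>?A. mu i v) = card {i\<in>?A. f i = v}"
      unfolding mu_def by (simp add: sum.If_cases Int_def eq_commute)
    also have "\<dots> \<le> 1"
    proof -
      have "finite {i\<in>?A. f i = v}" by simp
      moreover have "\<forall>a\<in>{i\<in>?A. f i = v}. \<forall>b\<in>{i\<in>?A. f i = v}. a = b"
      proof (intro ballI)
        fix a b assume a: "a \<in> {i\<in>?A. f i = v}" and b: "b \<in> {i\<in>?A. f i = v}"
        then have "f a = f b" "a \<in> {..<length es}" "b \<in> {..<length es}" by auto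
        then show "a = b" using inj_onD[OF f(2)] by blast
      qed
      ultimately have "card {i\<in>?A. f i = v} \<le> Suc 0" by (rule card_le_Suc0_iff_eq[THEN iffD2])
      then show ?thesis by simp
    qed
    finally show ?thesis .
  qed
  ultimately show "W_orientable n l es"
    unfolding W_orientable_def orientable_def Wedge_def[symmetric] by blast
qed



lemma sum_ge_card:
  fixes g :: "'a \<Rightarrow> nat"
  assumes "finite A" "\<forall>x\<in>A. g x \<ge> 1"
  shows "card A \<le> sum g A"
proof -
  have "sum (\<lambda>_. 1::nat) A \<le> sum g A" using assms by (intro sum_mono) auto
  then show ?thesis by simp
qed

lemma back_dir:
  assumes n: "n \<ge> 1" and l: "l \<ge> 2" and es: "\<forall>e\<in>set es. \<forall>j\<in>#e. j < n"
    and W: "What_orientable n l es"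
  shows "W_orientable n l es"
proof -
  define m where "m = length es"
  define Iset where "Iset = Inl ` {..<m} \<union> Inr ` {..<n}"
  obtain mu :: "nat + nat \<Rightarrow> nat \<Rightarrow> nat" where
    m1: "\<forall>x\<in>Iset. (\<Sum>v\<in>What_edge n es x. mu x v) = What_weight l x" and
    m2: "\<forall>v\<in>{0..<n}. (\<Sum>x\<in>{x\<in>Iset. v \<in> What_edge n es x}. mu x v) \<le> l"
    using W unfolding What_orientable_def orientable_def Iset_def m_def by blast
  have ex: "\<exists>j. j \<in># es ! i \<and> mu (Inl i) j \<ge> 1" if i: "i < m" for i
  proof (rule ccontr)
    assume "\<not> ?thesis"
    then have "(\<Sum>v\<in>What_edge n es (Inl i). mu (Inl i) v) = 0"
      by (intro sum.neutral) (auto simp: What_edge_def)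
    moreover have "Inl i \<in> Iset" using i by (simp add: Iset_def)
    ultimately show False using m1 by (fastforce simp: What_weight_def)
  qed
  define j where "j i = (SOME j. j \<in># es ! i \<and> mu (Inl i) j \<ge> 1)" for i
  have j: "j i \<in># es ! i \<and> mu (Inl i) (j i) \<ge> 1" if "i < m" for i
    unfolding j_def using someI_ex[OF ex[OF that]] .
  have jn: "j i < n" if "i < m" for i
    using j[OF that] es that unfolding m_def by (meson nth_mem)
  define pr where "pr u = (u + n - 1) mod n" for u
  define c where "c u = (if n = 1 then 0 else mu (Inr u) ((u+1) mod n))" for u
  have helper: "mu (Inr u) u + c u = l - 1" if u: "u < n" and n2: "n \<ge> 2" for u
  proof -
    have ne: "(u+1) mod n \<noteq> u" using u n2 suc_mod[OF u] by auto
    have "Inr u \<in> Iset" using u by (simp add: Iset_def)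
    then have "(\<Sum>v\<in>{u, (u+1) mod n}. mu (Inr u) v) = l - 1"
      using m1 by (fastforce simp: What_edge_def What_weight_def)
    then show ?thesis using ne n2 by (simp add: c_def)
  qed
  have cb: "\<forall>u<n. c u \<le> l - 1"
  proof (intro allI impI)
    fix u assume u: "u < n"
    show "c u \<le> l - 1"
    proof (cases "n = 1")
      case True then show ?thesis by (simp add: c_def)
    next
      case False then show ?thesis using helper[OF u] n by linarith
    qed
  qed
  have K: "card {i\<in>{..<m}. j i = v} + c (pr v) \<le> c v + 1" if v: "v < n" for v
  proof -
    define X where "X = {x\<in>Iset. v \<in> What_edge n es x}"
    define A :: "(nat + nat) set" where "A = Inl ` {i\<in>{..<m}. j i = v}"
    define B where "B = {Inr v, Inr (pr v) :: nat + nat}"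
    have finX: "finite X" unfolding X_def Iset_def by simp
    have AX: "A \<subseteq> X" unfolding A_def X_def Iset_def using j
      by (auto simp: What_edge_def)
    have prn: "pr v < n" using n by (simp add: pr_def)
    have ps: "(pr v + 1) mod n = v" using pred_suc[OF v] by (simp add: pr_def)
    have BX: "B \<subseteq> X" unfolding B_def X_def Iset_def using v prn ps
      by (auto simp: What_edge_def)
    have AB: "A \<inter> B = {}" unfolding A_def B_def by auto
    have "sum (\<lambda>x. mu x v) (A \<union> B) \<le> sum (\<lambda>x. mu x v) X"
      using AX BX finX by (intro sum_mono2) auto
    also have "\<dots> \<le> l" using m2 v unfolding X_def by auto
    finally have tot: "sum (\<lambda>x. mu x v) A + sum (\<lambda>x. mu x v) B \<le> l"
      using AB finX AX BX by (simp add: sum.union_disjoint finite_subset)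
    have cA: "card A = card {i\<in>{..<m}. j i = v}" unfolding A_def
      by (intro card_image) (simp add: inj_on_def)
    have "card A \<le> sum (\<lambda>x. mu x v) A"
      using j unfolding A_def by (intro sum_ge_card) auto
    then have tA: "card {i\<in>{..<m}. j i = v} \<le> sum (\<lambda>x. mu x v) A" using cA by simp
    show ?thesis
    proof (cases "n = 1")
      case True
      then have v0: "v = 0" and p0: "pr v = 0" using v by (auto simp: pr_def)
      have "Inr 0 \<in> Iset" using n by (simp add: Iset_def)
      then have "mu (Inr 0) 0 = l - 1" using m1 True
        by (fastforce simp: What_edge_def What_weight_def)
      then have "sum (\<lambda>x. mu x v) B = l - 1" using v0 p0 by (simp add: B_def)
      then show ?thesis using tot tA True l by (simp add: c_def)
    next
      case False
      then have n2: "n \<ge> 2" using n by simp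
      have "pr v \<noteq> v"
      proof
        assume "pr v = v"
        then have "(v + 1) mod n = v" using ps by simp
        then show False using suc_mod[OF v] n2 by (auto split: if_splits)
      qed
      then have "sum (\<lambda>x. mu x v) B = mu (Inr v) v + mu (Inr (pr v)) v" by (simp add: B_def)
      moreover have "mu (Inr (pr v)) v = c (pr v)" using False ps by (simp add: c_def)
      moreover have "mu (Inr v) v + c v = l - 1" using helper[OF v n2] .
      ultimately show ?thesis using tot tA l by linarith
    qed
  qed
  have hallc: "\<forall>S\<subseteq>{..<m}. card S \<le> card (\<Union>((\<lambda>i. cyc_interval n l (j i)) ` S))"
  proof (intro allI impI)
    fix S assume S: "S \<subseteq> {..<m}"
    have fS: "finite S" using S finite_subset by blast
    have KS: "\<forall>v<n. card {i\<in>S. j i = v} + c ((v+n-1) mod n) \<le> c v + 1"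
    proof (intro allI impI)
      fix v assume v: "v < n"
      have "card {i\<in>S. j i = v} \<le> card {i\<in>{..<m}. j i = v}" using S by (intro card_mono) auto
      then show "card {i\<in>S. j i = v} + c ((v+n-1) mod n) \<le> c v + 1" using K[OF v] by (simp add: pr_def)
    qed
    show "card S \<le> card (\<Union>((\<lambda>i. cyc_interval n l (j i)) ` S))"
      using count_arg[OF n _ fS _ cb KS] l jn S by auto
  qed
  obtain f where f: "\<forall>i\<in>{..<m}. f i \<in> cyc_interval n l (j i)" "inj_on f {..<m}"
    using hall[OF _ _ hallc] by (meson finite_lessThan finite_subset cyc_sub[OF n])
  have "\<forall>i<length es. f i \<in> Wedge n l es i"
    using f(1) j unfolding Wedge_def m_def by auto
  then show ?thesis using W_iff[OF n] f(2) unfolding m_def by blast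
qed


lemma mod_inj_aux:
  fixes a d n :: nat
  assumes "a < n" "d < n" "(a + d) mod n = a" shows "d = 0"
proof (cases "a + d < n")
  case True then show ?thesis using assms by simp
next
  case False
  then have "(a + d) mod n = (a + d - n) mod n" by (simp add: le_mod_geq)
  also have "\<dots> = a + d - n" using assms by simp
  finally show ?thesis using assms False by linarith
qed

lemma mod_inj_shift:
  fixes j s s' n :: nat
  assumes "s < n" "s' < n" "(j + s) mod n = (j + s') mod n" shows "s = s'"
proof -
  have gen: "s = s'" if le: "s \<le> s'" and a: "s < n" "s' < n" "(j + s) mod n = (j + s') mod n" for s s'
  proof -
    have "j + s' = (j + s) + (s' - s)" using le by simp
    then have "((j + s) mod n + (s' - s)) mod n = (j + s) mod n"
      using a(3) by (metis mod_add_left_eq)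
    then have "s' - s = 0" using mod_inj_aux[of "(j+s) mod n" n "s' - s"] a by simp
    then show ?thesis using le by simp
  qed
  show ?thesis using gen[of s s'] gen[of s' s] assms by (cases "s \<le> s'") auto
qed


lemma suc_pred: "u < (n::nat) \<Longrightarrow> ((u + 1) mod n + n - 1) mod n = u"
proof (cases "u = n - 1")
  case True
  assume a: "u < n"
  then show ?thesis using True suc_mod[OF a] pred_mod[of 0 n] by simp
next
  case False
  assume a: "u < n"
  then have "u + 1 < n" using False by auto
  then show ?thesis using False suc_mod[OF a] pred_mod[of "u+1" n] by simp
qed

lemma card_less_Suc:
  "card {s. s < Suc t \<and> P s} = card {s. s < t \<and> P s} + (if P t then 1 else 0)"
proof -
  have e: "{s. s < Suc t \<and> P s} = {s. s < t \<and> P s} \<union> (if P t then {t} else {})"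
    by (auto simp: less_Suc_eq)
  show ?thesis unfolding e by (cases "P t") auto
qed

lemma shift_count:
  "card {s. s < t \<and> Q (Suc s)} + (if Q 0 then 1 else 0) =
   card {s. s < t \<and> Q s} + (if Q t then 1 else 0)"
proof (induction t)
  case 0 then show ?case by simp
next
  case (Suc t)
  then show ?case unfolding card_less_Suc[of t] by simp
qed

lemma fwd_dir:
  assumes n: "n \<ge> 1" and l: "l \<ge> 2" and es: "\<forall>e\<in>set es. \<forall>j\<in>#e. j < n"
    and W: "W_orientable n l es"
  shows "What_orientable n l es"
proof -
  define m where "m = length es"
  obtain f where f: "\<forall>i<m. f i \<in> Wedge n l es i" "inj_on f {..<m}"
    using W W_iff[OF n] unfolding m_def by blast
  have ex: "\<exists>j t. j \<in># es ! i \<and> t < l \<and> t < n \<and> f i = (j + t) mod n" if i: "i < m" for i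
  proof -
    obtain j t where jt: "j \<in># es ! i" "t < l" "f i = (j + t) mod n"
      using f(1) i unfolding Wedge_def cyc_interval_def by auto
    have "(j + t mod n) mod n = (j + t) mod n" by (simp add: mod_add_right_eq)
    moreover have "t mod n \<le> t" by simp
    have "t mod n < l" using jt(2) by (meson le_less_trans mod_less_eq_dividend)
    ultimately have "t mod n < l" "t mod n < n" "f i = (j + t mod n) mod n" using jt n
      by auto
    then show ?thesis using jt(1) by blast
  qed
  define j where "j i = (SOME j. \<exists>t. j \<in># es ! i \<and> t < l \<and> t < n \<and> f i = (j + t) mod n)" for i
  define t where "t i = (SOME t. j i \<in># es ! i \<and> t < l \<and> t < n \<and> f i = (j i + t) mod n)" for i
  have jt: "j i \<in># es ! i \<and> t i < l \<and> t i < n \<and> f i = (j i + t i) mod n" if i: "i < m" for i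
  proof -
    have "\<exists>t. j i \<in># es ! i \<and> t < l \<and> t < n \<and> f i = (j i + t) mod n"
      unfolding j_def using someI_ex[OF ex[OF i]] .
    then show ?thesis unfolding t_def by (rule someI_ex)
  qed
  have jn: "j i < n" if "i < m" for i
    using jt[OF that] es that unfolding m_def by (meson nth_mem)
  define pr where "pr u = (u + n - 1) mod n" for u
  define C where "C i u = card {s. s < t i \<and> (j i + s) mod n = u}" for i u
  define c where "c u = (\<Sum>i<m. C i u)" for u
  define L where "L = min l n"
  have cb: "c u \<le> L - 1" if u: "u < n" for u
  proof -
    define Pairs where "Pairs = Sigma {..<m} (\<lambda>i. {s. s < t i \<and> (j i + s) mod n = u})"
    have finP: "\<forall>i\<in>{..<m}. finite {s. s < t i \<and> (j i + s) mod n = u}" by auto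
    have cP: "c u = card Pairs" unfolding c_def C_def Pairs_def
      by (simp add: card_SigmaI finP)
    define g where "g p = f (fst p)" for p :: "nat \<times> nat"
    have inj: "inj_on g Pairs"
    proof (rule inj_onI)
      fix p q assume p: "p \<in> Pairs" and q: "q \<in> Pairs" and e: "g p = g q"
      obtain i s where pi: "p = (i, s)" by (cases p)
      obtain i' s' where qi: "q = (i', s')" by (cases q)
      have ii: "i < m" "i' < m" using p q pi qi by (auto simp: Pairs_def)
      then have "i = i'" using e inj_onD[OF f(2)] by (auto simp: g_def pi qi)
      moreover have "s < n" "s' < n" "(j i + s) mod n = (j i + s') mod n"
        using p q pi qi jt[OF ii(1)] jt[OF ii(2)] \<open>i = i'\<close> by (auto simp: Pairs_def)
      ultimately show "p = q" using mod_inj_shift pi qi by blast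
    qed
    have img: "g ` Pairs \<subseteq> (\<lambda>r. (u + r) mod n) ` {1..<L}"
    proof
      fix x assume "x \<in> g ` Pairs"
      then obtain i s where iss: "i < m" "s < t i" "(j i + s) mod n = u" "x = f i"
        by (auto simp: Pairs_def g_def)
      have "f i = (j i + t i) mod n" using jt[OF iss(1)] by simp
      also have "j i + t i = (j i + s) + (t i - s)" using iss(2) by simp
      also have "((j i + s) + (t i - s)) mod n = (u + (t i - s)) mod n"
        using iss(3) by (metis mod_add_left_eq)
      finally have "x = (u + (t i - s)) mod n" using iss(4) by simp
      moreover have "t i - s \<in> {1..<L}" using iss(2) jt[OF iss(1)] by (auto simp: L_def)
      ultimately show "x \<in> (\<lambda>r. (u + r) mod n) ` {1..<L}" by blast
    qed
    have "card Pairs = card (g ` Pairs)" using inj by (simp add: card_image)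
    also have "\<dots> \<le> card ((\<lambda>r. (u + r) mod n) ` {1..<L})" using img by (intro card_mono) auto
    also have "\<dots> \<le> card {1..<L}" by (rule card_image_le) simp
    finally show ?thesis using cP by simp
  qed
  have cbl: "c u \<le> l - 1" if "u < n" for u using cb[OF that] by (simp add: L_def)
  have flow: "c (pr v) + card {i\<in>{..<m}. j i = v} = c v + card {i\<in>{..<m}. f i = v}" if v: "v < n" for v
  proof -
    have per: "C i (pr v) + (if j i = v then 1 else 0) = C i v + (if f i = v then 1 else 0)"
      if i: "i < m" for i
    proof -
      define Q where "Q s \<longleftrightarrow> (j i + s) mod n = v" for s
      have q1: "(j i + s) mod n = pr v \<longleftrightarrow> Q (Suc s)" for s
      proof
        assume "(j i + s) mod n = pr v"
        then have "((j i + s) mod n + 1) mod n = v" using pred_suc[OF v] by (simp add: pr_def)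
        then show "Q (Suc s)" unfolding Q_def by (simp add: mod_Suc_eq)
      next
        assume "Q (Suc s)"
        then have "((j i + s) mod n + 1) mod n = v" unfolding Q_def by (simp add: mod_Suc_eq)
        then have "(((j i + s) mod n + 1) mod n + n - 1) mod n = pr v" by (simp add: pr_def)
        then show "(j i + s) mod n = pr v" using suc_pred[of "(j i + s) mod n" n] n by simp
      qed
      have "C i (pr v) = card {s. s < t i \<and> Q (Suc s)}" unfolding C_def q1 ..
      moreover have "C i v = card {s. s < t i \<and> Q s}" unfolding C_def Q_def ..
      moreover have "Q 0 \<longleftrightarrow> j i = v" unfolding Q_def using jn[OF i] by simp
      moreover have "Q (t i) \<longleftrightarrow> f i = v" unfolding Q_def using jt[OF i] by simp
      ultimately show ?thesis using shift_count[of "t i" Q] by simp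
    qed
    have "(\<Sum>i<m. C i (pr v) + (if j i = v then 1 else 0)) = (\<Sum>i<m. C i v + (if f i = v then 1 else 0))"
      using per by (intro sum.cong) auto
    then show ?thesis by (simp add: sum.distrib c_def sum.If_cases Int_def)
  qed
  have fv: "card {i\<in>{..<m}. f i = v} \<le> 1" for v
  proof -
    have "\<forall>a\<in>{i\<in>{..<m}. f i = v}. \<forall>b\<in>{i\<in>{..<m}. f i = v}. a = b"
    proof (intro ballI)
      fix a b assume a: "a \<in> {i\<in>{..<m}. f i = v}" and b: "b \<in> {i\<in>{..<m}. f i = v}"
      then have "f a = f b" "a \<in> {..<m}" "b \<in> {..<m}" by auto
      then show "a = b" using inj_onD[OF f(2)] by blast
    qed
    then have "card {i\<in>{..<m}. f i = v} \<le> Suc 0" by (intro card_le_Suc0_iff_eq[THEN iffD2]) auto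
    then show ?thesis by simp
  qed
  define mu :: "nat + nat \<Rightarrow> nat \<Rightarrow> nat" where
    "mu x v = (case x of Inl i \<Rightarrow> (if v = j i then 1 else 0)
       | Inr u \<Rightarrow> (if v = u then l - 1 - c u else 0) + (if v = (u+1) mod n \<and> v \<noteq> u then c u else 0))"
    for x v
  define Iset where "Iset = Inl ` {..<m} \<union> Inr ` {..<n}"
  have e1: "\<forall>x\<in>Iset. (\<Sum>v\<in>What_edge n es x. mu x v) = What_weight l x"
  proof
    fix x assume x: "x \<in> Iset"
    show "(\<Sum>v\<in>What_edge n es x. mu x v) = What_weight l x"
    proof (cases x)
      case (Inl i)
      then have i: "i < m" using x by (auto simp: Iset_def)
      have "j i \<in> set_mset (es ! i)" using jt[OF i] by simp
      then show ?thesis using Inl by (simp add: What_edge_def What_weight_def mu_def sum.delta')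
    next
      case (Inr u)
      then have u: "u < n" using x by (auto simp: Iset_def)
      show ?thesis
      proof (cases "(u+1) mod n = u")
        case True
        then have "n = 1" using suc_mod[OF u] u by (auto split: if_splits)
        then have "c u = 0" using cb[OF u] by (simp add: L_def)
        then show ?thesis using Inr True by (simp add: What_edge_def What_weight_def mu_def)
      next
        case False
        then show ?thesis using Inr cbl[OF u] by (simp add: What_edge_def What_weight_def mu_def)
      qed
    qed
  qed
  have e2: "\<forall>v\<in>{0..<n}. (\<Sum>x\<in>{x\<in>Iset. v \<in> What_edge n es x}. mu x v) \<le> l"
  proof
    fix v assume "v \<in> {0..<n}"
    then have v: "v < n" by simp
    have zero: "v \<notin> What_edge n es x \<Longrightarrow> mu x v = 0" if "x \<in> Iset" for x
      using that jt by (cases x) (auto simp: What_edge_def mu_def Iset_def)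
    have finI: "finite Iset" by (simp add: Iset_def)
    have "(\<Sum>x\<in>{x\<in>Iset. v \<in> What_edge n es x}. mu x v) = (\<Sum>x\<in>Iset. mu x v)"
      using zero finI by (intro sum.mono_neutral_left) auto
    also have "\<dots> = (\<Sum>x\<in>Inl ` {..<m}. mu x v) + (\<Sum>x\<in>Inr ` {..<n}. mu x v)"
      unfolding Iset_def by (intro sum.union_disjoint) auto
    also have "(\<Sum>x\<in>Inl ` {..<m}. mu x v) = (\<Sum>i<m. mu (Inl i) v)"
      by (simp add: sum.reindex)
    also have "\<dots> = card {i\<in>{..<m}. j i = v}"
      by (simp add: mu_def sum.If_cases Int_def eq_commute)
    also have "(\<Sum>x\<in>Inr ` {..<n}. mu x v) = (\<Sum>u<n. mu (Inr u) v)"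
      by (simp add: sum.reindex)
    also have "\<dots> = (\<Sum>u<n. (if v = u then l - 1 - c u else 0)) +
                     (\<Sum>u<n. (if v = (u+1) mod n \<and> v \<noteq> u then c u else 0))"
      by (simp add: mu_def sum.distrib)
    also have "(\<Sum>u<n. (if v = u then l - 1 - c u else 0)) = l - 1 - c v"
      using v by (simp add: sum.delta)
    also have "(\<Sum>u<n. (if v = (u+1) mod n \<and> v \<noteq> u then c u else 0)) \<le> (\<Sum>u<n. (if u = pr v then c u else 0))"
    proof (intro sum_mono)
      fix u assume "u \<in> {..<n}"
      then have u: "u < n" by simp
      show "(if v = (u+1) mod n \<and> v \<noteq> u then c u else 0) \<le> (if u = pr v then c u else 0)"
      proof (cases "v = (u+1) mod n")
        case True
        then have "u = pr v" using suc_pred[OF u] by (simp add: pr_def)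
        then show ?thesis by simp
      qed simp
    qed
    also have "(\<Sum>u<n. (if u = pr v then c u else 0)) = c (pr v)"
      using n by (simp add: sum.delta' pr_def)
    finally have "(\<Sum>x\<in>{x\<in>Iset. v \<in> What_edge n es x}. mu x v)
        \<le> card {i\<in>{..<m}. j i = v} + (l - 1 - c v + c (pr v))" by simp
    also have "\<dots> \<le> l" using flow[OF v] fv[of v] cbl[OF v] l by linarith
    finally show "(\<Sum>x\<in>{x\<in>Iset. v \<in> What_edge n es x}. mu x v) \<le> l" .
  qed
  show ?thesis unfolding What_orientable_def orientable_def
    using e1 e2 unfolding Iset_def m_def by blast
qed


theorem proposition1:
  fixes k l n :: nat and es :: "nat multiset list"
  assumes "k \<ge> 2" and "l \<ge> 2" and "n \<ge> 1"
    and "\<forall>e\<in>set es. size e = k \<and> (\<forall>j\<in>#e. j < n)"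
  shows "W_orientable n l es \<longleftrightarrow> What_orientable n l es"
proof -
  have es: "\<forall>e\<in>set es. \<forall>j\<in>#e. j < n" using assms(4) by blast
  show ?thesis using fwd_dir[OF assms(3,2) es] back_dir[OF assms(3,2) es] by blast
qed

end
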